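(* Let $f^*$ be any maximum flow in $\mathcal{H}$. Let $V_1\subseteq V$ be nonempty with $\rho_h(V_1)=\rho_h^*$, and let $\Lambda_1=\{\lambda\in\Lambda:\lambda\subseteq V_1\}$. Then for every non-trivial component $C$ of $\mathcal{H}_{f^*}$, either $C\subseteq V_1\cup\Lambda_1$ or $C\cap(V_1\cup\Lambda_1)=\emptyset$.
   Context: Let $G=(V,E)$ be a finite simple undirected graph and $h\ge2$. An $h$-clique is a set of $h$ pairwise adjacent nodes; $\mu_h(G[W])$ counts $h$-cliques inside $W$; for nonempty $W$, $\rho_h(W)=\mu_h(G[W])/|W|$; $\rho_h^*=\max_{\emptyset\ne W\subseteq V}\rho_h(W)$; $deg_G(v,h)$ is the number of $h$-cliques containing $v$; $\Lambda$ is the set of $(h-1)$-cliques of $G$ contained in some $h$-clique. Flow network $\mathcal{H}=(V_\mathcal{H},E_\mathcal{H},c)$: $V_\mathcal{H}=V\cup\Lambda\cup\{s,t\}$; for $v\in V$: arcs $(s,v)$ cap. $deg_G(v,h)$, $(v,t)$ cap. $h\rho_h^*$, $(v,s),(t,v)$ cap. $0$; for $\lambda\in\Lambda$, $v\in\lambda$: $(\lambda,v)$ cap. $+\infty$, $(v,\lambda)$ cap. $0$; for $\lambda\in\Lambda$, $v\in V$ with $\lambda\cup\{v\}$ an $h$-clique: $(v,\lambda)$ cap. $1$, $(\lambda,v)$ cap. $0$; no other arcs. A flow $f$ satisfies $f(u,v)\le c(u,v)$, $f(v,u)=-f(u,v)$, conservation at nodes other than $s,t$; value $\sum_v f(s,v)$.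 The residual graph $\mathcal{H}_{f}$ has an arc $(u,v)$ whenever $(u,v)\in E_\mathcal{H}$ and $c(u,v)-f(u,v)>0$. A non-trivial component is a strongly connected component of $\mathcal{H}_{f^*}$ containing neither $s$ nor $t$. *)

theory Defs
  imports Complex_Main "HOL-Library.Extended_Real"
begin

(* Simple undirected graph G = (V,E): V finite vertex set, E a set of 2-element subsets of V. *)

definition is_clique :: "'a set set \<Rightarrow> 'a set \<Rightarrow> bool" where
  "is_clique E K \<longleftrightarrow> (\<forall>u\<in>K. \<forall>v\<in>K. u \<noteq> v \<longrightarrow> {u, v} \<in> E)"

definition hcliques :: "'a set \<Rightarrow> 'a set set \<Rightarrow> nat \<Rightarrow> 'a set set" where
  "hcliques V E h = {K. K \<subseteq> V \<and> card K = h \<and> is_clique E K}"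

definition mu :: "'a set \<Rightarrow> 'a set set \<Rightarrow> nat \<Rightarrow> 'a set \<Rightarrow> nat" where
  "mu V E h W = card {K \<in> hcliques V E h. K \<subseteq> W}"

definition rho :: "'a set \<Rightarrow> 'a set set \<Rightarrow> nat \<Rightarrow> 'a set \<Rightarrow> real" where
  "rho V E h W = real (mu V E h W) / real (card W)"

definition rho_star :: "'a set \<Rightarrow> 'a set set \<Rightarrow> nat \<Rightarrow> real" where
  "rho_star V E h = Max {rho V E h W | W. W \<subseteq> V \<and> W \<noteq> {}}"

definition cdeg :: "'a set \<Rightarrow> 'a set set \<Rightarrow> nat \<Rightarrow> 'a \<Rightarrow> nat" where
  "cdeg V E h v = card {K \<in> hcliques V E h. v \<in> K}"

definition Lam :: "'a set \<Rightarrow> 'a set set \<Rightarrow> nat \<Rightarrow> 'a set set" where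
  "Lam V E h = {l \<in> hcliques V E (h - 1). \<exists>K \<in> hcliques V E h. l \<subseteq> K}"

datatype 'a hnode = Src | Snk | VN 'a | LN "'a set"

definition nodesH :: "'a set \<Rightarrow> 'a set set \<Rightarrow> nat \<Rightarrow> 'a hnode set" where
  "nodesH V E h = {Src, Snk} \<union> VN ` V \<union> LN ` Lam V E h"

(* the arc set E_H (including the zero-capacity reverse arcs) *)
fun arcH :: "'a set \<Rightarrow> 'a set set \<Rightarrow> nat \<Rightarrow> 'a hnode \<Rightarrow> 'a hnode \<Rightarrow> bool" where
  "arcH V E h Src (VN v) = (v \<in> V)"
| "arcH V E h (VN v) Src = (v \<in> V)"
| "arcH V E h (VN v) Snk = (v \<in> V)"
| "arcH V E h Snk (VN v) = (v \<in> V)"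
| "arcH V E h (LN l) (VN v) =
     (l \<in> Lam V E h \<and> v \<in> V \<and> (v \<in> l \<or> insert v l \<in> hcliques V E h))"
| "arcH V E h (VN v) (LN l) =
     (l \<in> Lam V E h \<and> v \<in> V \<and> (v \<in> l \<or> insert v l \<in> hcliques V E h))"
| "arcH V E h _ _ = False"

fun capH :: "'a set \<Rightarrow> 'a set set \<Rightarrow> nat \<Rightarrow> 'a hnode \<Rightarrow> 'a hnode \<Rightarrow> ereal" where
  "capH V E h Src (VN v) = (if v \<in> V then ereal (real (cdeg V E h v)) else 0)"
| "capH V E h (VN v) Snk = (if v \<in> V then ereal (real h * rho_star V E h) else 0)"
| "capH V E h (LN l) (VN v) = (if l \<in> Lam V E h \<and> v \<in> l then \<infinity> else 0)"
| "capH V E h (VN v) (LN l) =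
     (if l \<in> Lam V E h \<and> v \<in> V \<and> insert v l \<in> hcliques V E h then 1 else 0)"
| "capH V E h _ _ = 0"

definition is_flowH :: "'a set \<Rightarrow> 'a set set \<Rightarrow> nat \<Rightarrow> ('a hnode \<Rightarrow> 'a hnode \<Rightarrow> real) \<Rightarrow> bool" where
  "is_flowH V E h f \<longleftrightarrow>
     (\<forall>u\<in>nodesH V E h. \<forall>v\<in>nodesH V E h.
        ereal (f u v) \<le> capH V E h u v \<and> f v u = - f u v) \<and>
     (\<forall>x\<in>nodesH V E h - {Src, Snk}. (\<Sum>y\<in>nodesH V E h. f x y) = 0)"

definition flow_value :: "'a set \<Rightarrow> 'a set set \<Rightarrow> nat \<Rightarrow> ('a hnode \<Rightarrow> 'a hnode \<Rightarrow> real) \<Rightarrow> real" where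
  "flow_value V E h f = (\<Sum>v\<in>nodesH V E h. f Src v)"

definition is_max_flowH :: "'a set \<Rightarrow> 'a set set \<Rightarrow> nat \<Rightarrow> ('a hnode \<Rightarrow> 'a hnode \<Rightarrow> real) \<Rightarrow> bool" where
  "is_max_flowH V E h f \<longleftrightarrow> is_flowH V E h f \<and>
     (\<forall>g. is_flowH V E h g \<longrightarrow> flow_value V E h g \<le> flow_value V E h f)"

definition residH :: "'a set \<Rightarrow> 'a set set \<Rightarrow> nat \<Rightarrow> ('a hnode \<Rightarrow> 'a hnode \<Rightarrow> real) \<Rightarrow> ('a hnode \<times> 'a hnode) set" where
  "residH V E h f = {(u, v). arcH V E h u v \<and> ereal (f u v) < capH V E h u v}"

definition is_sccH :: "'a set \<Rightarrow> 'a set set \<Rightarrow> nat \<Rightarrow> ('a hnode \<Rightarrow> 'a hnode \<Rightarrow> real) \<Rightarrow> 'a hnode set \<Rightarrow> bool" where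
  "is_sccH V E h f C \<longleftrightarrow> (\<exists>x\<in>nodesH V E h.
     C = {y \<in> nodesH V E h. (x, y) \<in> (residH V E h f)\<^sup>* \<and> (y, x) \<in> (residH V E h f)\<^sup>*})"

end

theory Submission
  imports Defs
begin


lemma finite_Lam: "finite V \<Longrightarrow> finite (Lam V E h)"
proof -
  assume "finite V"
  have "Lam V E h \<subseteq> Pow V" by (auto simp: Lam_def hcliques_def)
  then show ?thesis using \<open>finite V\<close> finite_subset by blast
qed

lemma finite_hcliques: "finite V \<Longrightarrow> finite (hcliques V E h)"
proof -
  assume "finite V"
  have "hcliques V E h \<subseteq> Pow V" by (auto simp: hcliques_def)
  then show ?thesis using \<open>finite V\<close> finite_subset by blast
qed

lemma finite_nodesH: "finite V \<Longrightarrow> finite (nodesH V E h)"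
  by (simp add: nodesH_def finite_Lam)

lemma Lam_sub: "l \<in> Lam V E h \<Longrightarrow> l \<subseteq> V" by (auto simp: Lam_def hcliques_def)

lemma resid_nodes: "(u,v) \<in> residH V E h f \<Longrightarrow> u \<in> nodesH V E h \<and> v \<in> nodesH V E h"
  by (cases u; cases v) (auto simp: residH_def nodesH_def)

lemma arcH_sym: "arcH V E h u v = arcH V E h v u"
  by (cases u; cases v) auto

lemma capH_noarc: "u \<in> nodesH V E h \<Longrightarrow> v \<in> nodesH V E h \<Longrightarrow> \<not> arcH V E h u v \<Longrightarrow> capH V E h u v = 0"
  by (cases u; cases v) (auto simp: nodesH_def dest: Lam_sub)

lemma capH_nonneg: "0 \<le> rho_star V E h \<Longrightarrow> 0 \<le> capH V E h u v"
  by (cases u; cases v) auto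

lemma flow_cap:
  assumes "is_flowH V E h f" "u \<in> nodesH V E h" "v \<in> nodesH V E h"
  shows "ereal (f u v) \<le> capH V E h u v"
proof -
  have "\<forall>u\<in>nodesH V E h. \<forall>v\<in>nodesH V E h. ereal (f u v) \<le> capH V E h u v \<and> f v u = - f u v"
    using assms(1) unfolding is_flowH_def by (rule conjunct1)
  from this[rule_format, OF assms(2,3)] show ?thesis by (rule conjunct1)
qed

lemma flow_skew:
  assumes "is_flowH V E h f" "u \<in> nodesH V E h" "v \<in> nodesH V E h"
  shows "f v u = - f u v"
proof -
  have "\<forall>u\<in>nodesH V E h. \<forall>v\<in>nodesH V E h. ereal (f u v) \<le> capH V E h u v \<and> f v u = - f u v"
    using assms(1) unfolding is_flowH_def by (rule conjunct1)
  from this[rule_format, OF assms(2,3)] show ?thesis by (rule conjunct2)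
qed

lemma flow_cons:
  assumes "is_flowH V E h f" "x \<in> nodesH V E h - {Src, Snk}"
  shows "(\<Sum>y\<in>nodesH V E h. f x y) = 0"
proof -
  have "\<forall>x\<in>nodesH V E h - {Src, Snk}. (\<Sum>y\<in>nodesH V E h. f x y) = 0"
    using assms(1) unfolding is_flowH_def by (rule conjunct2)
  from this[rule_format, OF assms(2)] show ?thesis .
qed

lemma sat:
  assumes fl: "is_flowH V E h f" and u: "u \<in> nodesH V E h" and v: "v \<in> nodesH V E h"
    and nr: "(u,v) \<notin> residH V E h f"
  shows "ereal (f u v) = capH V E h u v"
proof (cases "arcH V E h u v")
  case True
  with nr have "\<not> ereal (f u v) < capH V E h u v" by (simp add: residH_def)
  moreover have "ereal (f u v) \<le> capH V E h u v" using flow_cap[OF fl u v] .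
  ultimately show ?thesis by simp
next
  case False
  then have F2: "\<not> arcH V E h v u" by (simp add: arcH_sym)
  have c1: "capH V E h u v = 0" using capH_noarc[OF u v False] .
  have c2: "capH V E h v u = 0" using capH_noarc[OF v u F2] .
  have "ereal (f u v) \<le> 0" "ereal (f v u) \<le> 0" "f v u = - f u v"
    using flow_cap[OF fl u v] flow_cap[OF fl v u] flow_skew[OF fl u v] c1 c2 by auto
  then have "f u v = 0" by simp
  then show ?thesis using c1 by (simp add: zero_ereal_def)
qed

lemma skew_zero:
  assumes "\<forall>u\<in>T. \<forall>v\<in>T. f v u = - f u v"
  shows "(\<Sum>u\<in>T. \<Sum>v\<in>T. f u v) = (0::real)"
proof -
  have "(\<Sum>u\<in>T. \<Sum>v\<in>T. f u v) = (\<Sum>v\<in>T. \<Sum>u\<in>T. f u v)" by (rule sum.swap)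
  also have "\<dots> = (\<Sum>v\<in>T. \<Sum>u\<in>T. - f v u)"
  proof (intro sum.cong refl)
    fix v u assume vu: "v \<in> T" "u \<in> T"
    show "f u v = - f v u" using assms[rule_format, OF vu] .
  qed
  also have "\<dots> = - (\<Sum>u\<in>T. \<Sum>v\<in>T. f u v)" by (simp add: sum_negf)
  finally show ?thesis by simp
qed

lemma cut_value:
  assumes fl: "is_flowH V E h f" and fin: "finite V"
    and T: "T \<subseteq> nodesH V E h" "Src \<in> T" "Snk \<notin> T"
  shows "(\<Sum>u\<in>T. \<Sum>v\<in>nodesH V E h - T. f u v) = flow_value V E h f"
proof -
  let ?N = "nodesH V E h"
  have finN: "finite ?N" using fin by (rule finite_nodesH)
  have finT: "finite T" using finN T(1) finite_subset by blast
  have a: "(\<Sum>u\<in>T. \<Sum>v\<in>?N. f u v) = flow_value V E h f"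
  proof -
    have "(\<Sum>u\<in>T. \<Sum>v\<in>?N. f u v) = (\<Sum>u\<in>T. if u = Src then (\<Sum>v\<in>?N. f Src v) else 0)"
    proof (rule sum.cong[OF refl])
      fix u assume u: "u \<in> T"
      show "(\<Sum>v\<in>?N. f u v) = (if u = Src then (\<Sum>v\<in>?N. f Src v) else 0)"
      proof (cases "u = Src")
        case False
        then have "u \<in> ?N - {Src, Snk}" using u T by auto
        then show ?thesis using flow_cons[OF fl] False by simp
      qed simp
    qed
    also have "\<dots> = flow_value V E h f" using T finT by (simp add: flow_value_def)
    finally show ?thesis .
  qed
  have b: "(\<Sum>u\<in>T. \<Sum>v\<in>?N. f u v) = (\<Sum>u\<in>T. \<Sum>v\<in>?N - T. f u v) + (\<Sum>u\<in>T. \<Sum>v\<in>T. f u v)"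
    using T(1) finN by (simp add: sum.subset_diff[of T ?N] sum.distrib)
  have c: "(\<Sum>u\<in>T. \<Sum>v\<in>T. f u v) = 0"
  proof (rule skew_zero)
    show "\<forall>u\<in>T. \<forall>v\<in>T. f v u = - f u v"
    proof (intro ballI)
      fix u v assume uv: "u \<in> T" "v \<in> T"
      then have "u \<in> ?N" "v \<in> ?N" using T(1) by auto
      then show "f v u = - f u v" by (rule flow_skew[OF fl])
    qed
  qed
  from a b c show ?thesis by simp
qed

lemma walk_exists:
  assumes "(a,b) \<in> r\<^sup>*" "r \<subseteq> N \<times> N" "finite N"
  shows "\<exists>w::'n \<Rightarrow> 'n \<Rightarrow> nat. (\<forall>u v. 0 < w u v \<longrightarrow> (u,v) \<in> r) \<and>
     (\<forall>x\<in>N. (\<Sum>y\<in>N. real (w x y) - real (w y x)) = (if x = a then 1 else 0) - (if x = b then 1 else 0))"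
  using assms(1)
proof (induction rule: rtrancl_induct)
  case base
  show ?case by (rule exI[of _ "\<lambda>_ _. 0"]) simp
next
  case (step y z)
  then obtain w where w1: "\<forall>u v. 0 < w u v \<longrightarrow> (u,v) \<in> r" and
    w2: "\<forall>x\<in>N. (\<Sum>y\<in>N. real (w x y) - real (w y x)) = (if x = a then 1 else 0) - (if x = y then 1 else 0)"
    by blast
  have yz: "y \<in> N" "z \<in> N" using step.hyps(2) assms(2) by auto
  define w' where "w' = (\<lambda>u v. w u v + (if u = y \<and> v = z then 1 else 0))"
  have "\<forall>u v. 0 < w' u v \<longrightarrow> (u,v) \<in> r" using w1 step.hyps(2) by (auto simp: w'_def)
  moreover have "\<forall>x\<in>N. (\<Sum>y'\<in>N. real (w' x y') - real (w' y' x)) = (if x = a then 1 else 0) - (if x = z then 1 else 0)"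
  proof
    fix x assume x: "x \<in> N"
    have "(\<Sum>y'\<in>N. real (w' x y') - real (w' y' x)) = (\<Sum>y'\<in>N. real (w x y') - real (w y' x))
       + ((\<Sum>y'\<in>N. if y' = z then (if x = y then 1 else 0) else 0) - (\<Sum>y'\<in>N. if y' = y then (if x = z then 1 else 0) else (0::real)))"
    proof -
      have "(\<Sum>y'\<in>N. real (w' x y') - real (w' y' x)) = (\<Sum>y'\<in>N. (real (w x y') - real (w y' x)) + ((if y' = z then (if x = y then 1 else 0) else 0) - (if y' = y then (if x = z then 1 else 0) else (0::real))))"
        unfolding w'_def by (intro sum.cong) auto
      then show ?thesis by (simp add: sum.distrib sum_subtractf)
    qed
    also have "\<dots> = (if x = a then 1 else 0) - (if x = z then 1 else 0)"
      using yz x w2 assms(3) by simp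
    finally show "(\<Sum>y'\<in>N. real (w' x y') - real (w' y' x)) = (if x = a then 1 else 0) - (if x = z then 1 else 0)" .
  qed
  ultimately show ?case by blast
qed


lemma no_aug:
  assumes fin: "finite V" and mf: "is_max_flowH V E h f"
  shows "(Src, Snk) \<notin> (residH V E h f)\<^sup>*"
proof
  assume path: "(Src,Snk) \<in> (residH V E h f)\<^sup>*"
  let ?N = "nodesH V E h" and ?r = "residH V E h f"
  have rN: "?r \<subseteq> ?N \<times> ?N" using resid_nodes by fast
  have finN: "finite ?N" using fin by (rule finite_nodesH)
  obtain w where w1: "\<forall>u v. 0 < w u v \<longrightarrow> (u,v) \<in> ?r" and
    w2: "\<forall>x\<in>?N. (\<Sum>y\<in>?N. real (w x y) - real (w y x)) = (if x = Src then 1 else 0) - (if x = Snk then 1 else 0)"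
    using walk_exists[OF path rN finN] by blast
  have fl: "is_flowH V E h f" using mf by (simp add: is_max_flowH_def)
  define P where "P = {(u,v). u \<in> ?N \<and> v \<in> ?N \<and> 0 < w u v}"
  have finP: "finite P"
  proof -
    have "P \<subseteq> ?N \<times> ?N" by (auto simp: P_def)
    then show ?thesis using finN finite_subset by blast
  qed
  define d where "d = (\<lambda>(u,v). (if capH V E h u v = \<infinity> then 1 else real_of_ereal (capH V E h u v) - f u v) / real (w u v))"
  define \<epsilon> where "\<epsilon> = Min (insert 1 (d ` P))"
  have dpos: "\<forall>p\<in>P. 0 < d p"
  proof
    fix p assume p: "p \<in> P"
    obtain u v where uv: "p = (u,v)" by (cases p)
    have wpos: "0 < w u v" using p uv by (simp add: P_def)
    then have "(u,v) \<in> ?r" using w1 by blast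
    then have res: "ereal (f u v) < capH V E h u v" by (simp add: residH_def)
    show "0 < d p"
    proof (cases "capH V E h u v = \<infinity>")
      case True then show ?thesis using wpos uv by (simp add: d_def)
    next
      case False
      then obtain c where c: "capH V E h u v = ereal c" using res by (cases "capH V E h u v") auto
      then show ?thesis using wpos uv res False by (simp add: d_def)
    qed
  qed
  have epos: "0 < \<epsilon>" unfolding \<epsilon>_def using finP dpos by (simp add: Min_gr_iff)
  have ele: "\<forall>p\<in>P. \<epsilon> \<le> d p" unfolding \<epsilon>_def using finP by (simp add: Min_le)
  define g where "g = (\<lambda>u v. f u v + \<epsilon> * (real (w u v) - real (w v u)))"
  have gcap: "ereal (g u v) \<le> capH V E h u v" if u: "u \<in> ?N" and v: "v \<in> ?N" for u v
  proof (cases "w u v = 0")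
    case True
    then have "g u v \<le> f u v" using epos by (simp add: g_def)
    moreover have "ereal (f u v) \<le> capH V E h u v" using flow_cap[OF fl u v] .
    ultimately show ?thesis using order_trans[of "ereal (g u v)" "ereal (f u v)" "capH V E h u v"] by simp
  next
    case False
    then have P: "(u,v) \<in> P" using u v by (simp add: P_def)
    have wp: "0 < w u v" using False by simp
    have "(u,v) \<in> ?r" using w1 wp by blast
    then have res: "ereal (f u v) < capH V E h u v" by (simp add: residH_def)
    have gle: "g u v \<le> f u v + \<epsilon> * real (w u v)" using epos by (simp add: g_def algebra_simps)
    show ?thesis
    proof (cases "capH V E h u v = \<infinity>")
      case True then show ?thesis by simp
    next
      case cF: False
      then obtain c where c: "capH V E h u v = ereal c" using res by (cases "capH V E h u v") auto
      have "\<epsilon> \<le> d (u,v)" using ele P by blast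
      then have "\<epsilon> \<le> (c - f u v) / real (w u v)" using cF c by (simp add: d_def)
      then have "\<epsilon> * real (w u v) \<le> c - f u v" using False by (simp add: pos_le_divide_eq)
      then show ?thesis using c gle by simp
    qed
  qed
  have gflow: "is_flowH V E h g"
    unfolding is_flowH_def
  proof (intro conjI ballI)
    fix u v assume u: "u \<in> ?N" and v: "v \<in> ?N"
    show "ereal (g u v) \<le> capH V E h u v" using gcap u v .
    have sk: "f v u = - f u v" using flow_skew[OF fl u v] .
    show "g v u = - g u v" using sk by (simp add: g_def algebra_simps)
  next
    fix x assume x: "x \<in> ?N - {Src, Snk}"
    have "(\<Sum>y\<in>?N. g x y) = (\<Sum>y\<in>?N. f x y) + \<epsilon> * (\<Sum>y\<in>?N. real (w x y) - real (w y x))"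
      by (simp add: g_def sum.distrib sum_distrib_left)
    also have "\<dots> = 0" using flow_cons[OF fl x] w2 x by simp
    finally show "(\<Sum>y\<in>?N. g x y) = 0" .
  qed
  have SrcN: "Src \<in> ?N" by (simp add: nodesH_def)
  have "flow_value V E h g = flow_value V E h f + \<epsilon> * (\<Sum>y\<in>?N. real (w Src y) - real (w y Src))"
    by (simp add: flow_value_def g_def sum.distrib sum_distrib_left)
  also have "\<dots> = flow_value V E h f + \<epsilon>" using w2 SrcN by simp
  finally have "flow_value V E h g = flow_value V E h f + \<epsilon>" .
  moreover have "flow_value V E h g \<le> flow_value V E h f" using mf gflow by (simp add: is_max_flowH_def)
  ultimately show False using epos by simp
qed

lemma card_filter_sum: "finite A \<Longrightarrow> real (card {x\<in>A. P x}) = (\<Sum>x\<in>A. if P x then 1 else 0)"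
  by (simp add: sum.inter_filter[symmetric])

lemma del_in_Lam:
  assumes h2: "h \<ge> 2" and K: "K \<in> hcliques V E h" and x: "x \<in> K"
  shows "K - {x} \<in> Lam V E h"
proof -
  have fK: "finite K" using K h2 by (auto simp: hcliques_def intro: card_ge_0_finite)
  have "card (K - {x}) = h - 1" using K x fK by (simp add: hcliques_def)
  then have "K - {x} \<in> hcliques V E (h - 1)" using K by (auto simp: hcliques_def is_clique_def)
  then show ?thesis using K by (auto simp: Lam_def)
qed

lemma pair_count:
  assumes h2: "h \<ge> 2"
  shows "card {l \<in> Lam V E h - L. insert x l \<in> hcliques V E h} = card {K \<in> hcliques V E h. x \<in> K \<and> K - {x} \<notin> L}"
proof -
  let ?X = "{l \<in> Lam V E h - L. insert x l \<in> hcliques V E h}"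
  have nx: "x \<notin> l" if "l \<in> ?X" for l
  proof
    assume "x \<in> l"
    then have "insert x l = l" by auto
    then have "card l = h" using that by (simp add: hcliques_def)
    moreover have "card l = h - 1" using that by (simp add: Lam_def hcliques_def)
    ultimately show False using h2 by simp
  qed
  have eq: "{K \<in> hcliques V E h. x \<in> K \<and> K - {x} \<notin> L} = insert x ` ?X"
  proof (intro equalityI subsetI)
    fix K assume K: "K \<in> {K \<in> hcliques V E h. x \<in> K \<and> K - {x} \<notin> L}"
    then have "K - {x} \<in> ?X" using del_in_Lam[OF h2] by (auto simp: insert_absorb)
    moreover have "K = insert x (K - {x})" using K by auto
    ultimately show "K \<in> insert x ` ?X" by blast
  next
    fix K assume "K \<in> insert x ` ?X"
    then obtain l where l: "l \<in> ?X" "K = insert x l" by blast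
    have "K - {x} = l" using l nx by auto
    then show "K \<in> {K \<in> hcliques V E h. x \<in> K \<and> K - {x} \<notin> L}" using l by auto
  qed
  have inj: "inj_on (insert x) ?X"
  proof (rule inj_onI)
    fix a b assume a: "a \<in> ?X" and b: "b \<in> ?X" and e: "insert x a = insert x b"
    have "a = insert x a - {x}" using nx[OF a] by auto
    also have "\<dots> = insert x b - {x}" using e by simp
    also have "\<dots> = b" using nx[OF b] by auto
    finally show "a = b" .
  qed
  show ?thesis using eq inj by (simp add: card_image)
qed



lemma sum_nodes:
  assumes "finite A" "finite L" "a = Src \<or> a = Snk"
  shows "(\<Sum>u\<in>{a} \<union> VN ` A \<union> LN ` L. F u) = F a + (\<Sum>x\<in>A. F (VN x)) + (\<Sum>l\<in>L. F (LN l))"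
proof -
  have "(\<Sum>u\<in>{a} \<union> VN ` A \<union> LN ` L. F u) = (\<Sum>u\<in>{a} \<union> VN ` A. F u) + (\<Sum>u\<in>LN ` L. F u)"
    by (rule sum.union_disjoint) (use assms in auto)
  also have "(\<Sum>u\<in>{a} \<union> VN ` A. F u) = F a + (\<Sum>u\<in>VN ` A. F u)"
    by (subst sum.union_disjoint) (use assms in auto)
  also have "(\<Sum>u\<in>VN ` A. F u) = (\<Sum>x\<in>A. F (VN x))" by (simp add: sum.reindex inj_on_def)
  also have "(\<Sum>u\<in>LN ` L. F u) = (\<Sum>l\<in>L. F (LN l))" by (simp add: sum.reindex inj_on_def)
  finally show ?thesis .
qed

lemma Q_formula:
  assumes fin: "finite V" and AV: "A \<subseteq> V" and LL: "L \<subseteq> Lam V E h"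
  shows "(\<Sum>u\<in>{Src} \<union> VN ` A \<union> LN ` L. \<Sum>v\<in>nodesH V E h - ({Src} \<union> VN ` A \<union> LN ` L). real_of_ereal (capH V E h u v))
    = (\<Sum>x\<in>V-A. real (cdeg V E h x)) + (\<Sum>x\<in>A. real h * rho_star V E h + real (card {l\<in>Lam V E h - L. insert x l \<in> hcliques V E h}))"
proof -
  let ?T = "{Src} \<union> VN ` A \<union> LN ` L"
  let ?c = "\<lambda>u v. real_of_ereal (capH V E h u v)"
  have finL: "finite (Lam V E h)" using fin by (rule finite_Lam)
  have fA: "finite A" using fin AV finite_subset by blast
  have fL: "finite L" using finL LL finite_subset by blast
  have NT: "nodesH V E h - ?T = {Snk} \<union> VN ` (V - A) \<union> LN ` (Lam V E h - L)"
    using AV LL by (auto simp: nodesH_def)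
  have iS: "(\<Sum>v\<in>nodesH V E h - ?T. ?c Src v) = (\<Sum>x\<in>V-A. real (cdeg V E h x))"
    unfolding NT using fin finL by (subst sum_nodes) auto
  have iV: "(\<Sum>v\<in>nodesH V E h - ?T. ?c (VN x) v) = real h * rho_star V E h + real (card {l\<in>Lam V E h - L. insert x l \<in> hcliques V E h})"
    if x: "x \<in> A" for x
  proof -
    have xV: "x \<in> V" using x AV by auto
    have "(\<Sum>v\<in>nodesH V E h - ?T. ?c (VN x) v) = ?c (VN x) Snk + (\<Sum>y\<in>V-A. ?c (VN x) (VN y)) + (\<Sum>l\<in>Lam V E h - L. ?c (VN x) (LN l))"
      unfolding NT using fin finL by (subst sum_nodes) auto
    also have "(\<Sum>l\<in>Lam V E h - L. ?c (VN x) (LN l)) = (\<Sum>l\<in>Lam V E h - L. if insert x l \<in> hcliques V E h then 1 else 0)"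
      using xV by (intro sum.cong) auto
    also have "\<dots> = real (card {l\<in>Lam V E h - L. insert x l \<in> hcliques V E h})"
      by (rule card_filter_sum[symmetric]) (use finL in auto)
    finally show ?thesis using xV by simp
  qed
  have iL: "(\<Sum>v\<in>nodesH V E h - ?T. ?c (LN l) v) = 0" for l
  proof -
    have "(\<Sum>v\<in>nodesH V E h - ?T. ?c (LN l) v) = ?c (LN l) Snk + (\<Sum>y\<in>V-A. ?c (LN l) (VN y)) + (\<Sum>l'\<in>Lam V E h - L. ?c (LN l) (LN l'))"
      unfolding NT using fin finL by (subst sum_nodes) auto
    also have "(\<Sum>y\<in>V-A. ?c (LN l) (VN y)) = 0" by (intro sum.neutral) auto
    finally show ?thesis by simp
  qed
  have "(\<Sum>u\<in>?T. \<Sum>v\<in>nodesH V E h - ?T. ?c u v) = (\<Sum>v\<in>nodesH V E h - ?T. ?c Src v) + (\<Sum>x\<in>A. \<Sum>v\<in>nodesH V E h - ?T. ?c (VN x) v) + (\<Sum>l\<in>L. \<Sum>v\<in>nodesH V E h - ?T. ?c (LN l) v)"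
    using fA fL by (rule sum_nodes) simp
  also have "\<dots> = (\<Sum>x\<in>V-A. real (cdeg V E h x)) + (\<Sum>x\<in>A. real h * rho_star V E h + real (card {l\<in>Lam V E h - L. insert x l \<in> hcliques V E h}))"
    using iS iV iL by simp
  finally show ?thesis .
qed

definition Gk :: "'a set \<Rightarrow> 'a set \<Rightarrow> 'a set set \<Rightarrow> 'a set \<Rightarrow> real" where
  "Gk V A L K = (\<Sum>x\<in>V-A. if x \<in> K then 1 else 0) + (\<Sum>x\<in>A. if x \<in> K \<and> K - {x} \<notin> L then 1 else 0)"

lemma G_sum:
  assumes h2: "h \<ge> 2" and fin: "finite V" and AV: "A \<subseteq> V"
  shows "(\<Sum>x\<in>V-A. real (cdeg V E h x)) + (\<Sum>x\<in>A. real (card {l\<in>Lam V E h - L. insert x l \<in> hcliques V E h}))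
     = (\<Sum>K\<in>hcliques V E h. Gk V A L K)"
proof -
  have fK: "finite (hcliques V E h)" using fin by (rule finite_hcliques)
  have 1: "(\<Sum>x\<in>V-A. real (cdeg V E h x)) = (\<Sum>x\<in>V-A. \<Sum>K\<in>hcliques V E h. if x \<in> K then 1 else 0)"
    using fK by (simp add: cdeg_def card_filter_sum)
  have 2: "(\<Sum>x\<in>A. real (card {l\<in>Lam V E h - L. insert x l \<in> hcliques V E h}))
      = (\<Sum>x\<in>A. \<Sum>K\<in>hcliques V E h. if x \<in> K \<and> K - {x} \<notin> L then 1 else 0)"
    by (intro sum.cong refl) (simp only: pair_count[OF h2] card_filter_sum[OF fK])
  have s1: "(\<Sum>x\<in>V-A. \<Sum>K\<in>hcliques V E h. if x \<in> K then 1 else (0::real))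
      = (\<Sum>K\<in>hcliques V E h. \<Sum>x\<in>V-A. if x \<in> K then 1 else 0)" by (rule sum.swap)
  have s2: "(\<Sum>x\<in>A. \<Sum>K\<in>hcliques V E h. if x \<in> K \<and> K - {x} \<notin> L then 1 else (0::real))
      = (\<Sum>K\<in>hcliques V E h. \<Sum>x\<in>A. if x \<in> K \<and> K - {x} \<notin> L then 1 else 0)" by (rule sum.swap)
  show ?thesis unfolding 1 2 Gk_def s1 s2 by (simp only: sum.distrib)
qed

lemma G_nonneg: "0 \<le> Gk V A L K"
  unfolding Gk_def by (intro add_nonneg_nonneg sum_nonneg) auto

lemma sum_V_K:
  assumes fin: "finite V" and AV: "A \<subseteq> V" and K: "K \<in> hcliques V E h"
  shows "(\<Sum>x\<in>V-A. if x \<in> K then 1 else 0) + (\<Sum>x\<in>A. if x \<in> K then 1 else 0) = (real h)"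
proof -
  have "(\<Sum>x\<in>V-A. if x \<in> K then 1 else 0) + (\<Sum>x\<in>A. if x \<in> K then 1 else 0) = (\<Sum>x\<in>V. if x \<in> K then 1 else (0::real))"
    using fin AV by (simp add: sum.subset_diff[of A V])
  also have "\<dots> = real (card {x\<in>V. x \<in> K})" using fin by (simp add: card_filter_sum)
  also have "{x\<in>V. x \<in> K} = K" using K by (auto simp: hcliques_def)
  finally show ?thesis using K by (simp add: hcliques_def)
qed

lemma G_le:
  assumes fin: "finite V" and AV: "A \<subseteq> V" and K: "K \<in> hcliques V E h"
  shows "Gk V A L K \<le> real h"
proof -
  have "(\<Sum>x\<in>A. if x \<in> K \<and> K - {x} \<notin> L then 1 else 0) \<le> (\<Sum>x\<in>A. if x \<in> K then 1 else (0::real))"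
    by (intro sum_mono) auto
  then have "Gk V A L K \<le> (\<Sum>x\<in>V-A. if x \<in> K then 1 else 0) + (\<Sum>x\<in>A. if x \<in> K then 1 else (0::real))"
    unfolding Gk_def by (rule add_left_mono)
  then show ?thesis unfolding sum_V_K[OF fin AV K] .
qed

lemma G_full:
  assumes fin: "finite V" and AV: "A \<subseteq> V" and K: "K \<in> hcliques V E h"
    and nK: "\<not> K \<subseteq> A" and LA: "\<forall>l\<in>L. l \<subseteq> A"
  shows "Gk V A L K = real h"
proof -
  have "(\<Sum>x\<in>A. if x \<in> K \<and> K - {x} \<notin> L then 1 else 0) = (\<Sum>x\<in>A. if x \<in> K then 1 else (0::real))"
  proof (rule sum.cong[OF refl])
    fix x assume x: "x \<in> A"
    show "(if x \<in> K \<and> K - {x} \<notin> L then 1 else 0) = (if x \<in> K then 1 else (0::real))"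
    proof (cases "x \<in> K")
      case True
      have "K - {x} \<notin> L"
      proof
        assume "K - {x} \<in> L"
        then have "K - {x} \<subseteq> A" by (rule bspec[OF LA])
        with x have "K \<subseteq> A" by blast
        with nK show False by blast
      qed
      with True show ?thesis by simp
    next
      case False then show ?thesis by simp
    qed
  qed
  then show ?thesis unfolding Gk_def by (simp only: sum_V_K[OF fin AV K])
qed

lemma G_zero:
  assumes h2: "h \<ge> 2" and K: "K \<in> hcliques V E h"
    and sK: "K \<subseteq> A" and LA: "\<forall>l\<in>Lam V E h. l \<subseteq> A \<longrightarrow> l \<in> L"
  shows "Gk V A L K = 0"
proof -
  have "(\<Sum>x\<in>V-A. if x \<in> K then 1 else (0::real)) = 0" using sK by (intro sum.neutral) auto
  moreover have "(\<Sum>x\<in>A. if x \<in> K \<and> K - {x} \<notin> L then 1 else (0::real)) = 0"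
  proof (intro sum.neutral ballI)
    fix x assume "x \<in> A"
    show "(if x \<in> K \<and> K - {x} \<notin> L then 1 else (0::real)) = 0"
    proof (cases "x \<in> K")
      case True
      then have "K - {x} \<in> Lam V E h" using del_in_Lam[OF h2 K] by blast
      moreover have "K - {x} \<subseteq> A" using sK by blast
      ultimately have "K - {x} \<in> L" using LA by simp
      then show ?thesis by simp
    qed simp
  qed
  ultimately show ?thesis unfolding Gk_def by simp
qed

lemma mu_sum: "finite V \<Longrightarrow> real (mu V E h A) = (\<Sum>K\<in>hcliques V E h. if K \<subseteq> A then 1 else 0)"
  by (simp add: mu_def card_filter_sum finite_hcliques)

lemma split_h:
  "(\<Sum>K\<in>X. if K \<subseteq> A then 0 else real h) + real h * (\<Sum>K\<in>X. if K \<subseteq> A then 1 else 0) = real h * real (card X)"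
proof -
  have "(\<Sum>K\<in>X. if K \<subseteq> A then 0 else real h) + real h * (\<Sum>K\<in>X. if K \<subseteq> A then 1 else 0)
      = (\<Sum>K\<in>X. (if K \<subseteq> A then 0 else real h) + real h * (if K \<subseteq> A then 1 else 0))"
    by (simp add: sum.distrib sum_distrib_left)
  also have "\<dots> = (\<Sum>K\<in>X. real h)" by (intro sum.cong) auto
  finally show ?thesis by simp
qed

lemma Q_lower:
  assumes h2: "h \<ge> 2" and fin: "finite V" and AV: "A \<subseteq> V" and LA: "\<forall>l\<in>L. l \<subseteq> A"
    and mule: "real (mu V E h A) \<le> real (card A) * rho_star V E h"
  shows "real h * real (card (hcliques V E h)) \<le>
    (\<Sum>x\<in>V-A. real (cdeg V E h x)) + (\<Sum>x\<in>A. real h * rho_star V E h + real (card {l\<in>Lam V E h - L. insert x l \<in> hcliques V E h}))"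
proof -
  have fK: "finite (hcliques V E h)" using fin by (rule finite_hcliques)
  have eq: "(\<Sum>x\<in>V-A. real (cdeg V E h x)) + (\<Sum>x\<in>A. real h * rho_star V E h + real (card {l\<in>Lam V E h - L. insert x l \<in> hcliques V E h}))
     = (\<Sum>K\<in>hcliques V E h. Gk V A L K) + real h * (real (card A) * rho_star V E h)"
    using G_sum[OF h2 fin AV, of E L] by (simp add: sum.distrib)
  have g: "(\<Sum>K\<in>hcliques V E h. if K \<subseteq> A then 0 else real h) \<le> (\<Sum>K\<in>hcliques V E h. Gk V A L K)"
    by (intro sum_mono) (use G_full[OF fin AV _ _ LA] G_nonneg in auto)
  have m: "real h * (\<Sum>K\<in>hcliques V E h. if K \<subseteq> A then 1 else 0) \<le> real h * (real (card A) * rho_star V E h)"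
    using mule mu_sum[OF fin] by (intro mult_left_mono) auto
  show ?thesis using eq g m split_h[where X="hcliques V E h" and A=A and h=h] by linarith
qed

lemma Q_upper:
  assumes h2: "h \<ge> 2" and fin: "finite V" and AV: "A \<subseteq> V"
    and mueq: "real (mu V E h A) = real (card A) * rho_star V E h"
  shows "(\<Sum>x\<in>V-A. real (cdeg V E h x)) + (\<Sum>x\<in>A. real h * rho_star V E h + real (card {l\<in>Lam V E h - {l \<in> Lam V E h. l \<subseteq> A}. insert x l \<in> hcliques V E h}))
      \<le> real h * real (card (hcliques V E h))"
proof -
  let ?L = "{l \<in> Lam V E h. l \<subseteq> A}"
  have fK: "finite (hcliques V E h)" using fin by (rule finite_hcliques)
  have eq: "(\<Sum>x\<in>V-A. real (cdeg V E h x)) + (\<Sum>x\<in>A. real h * rho_star V E h + real (card {l\<in>Lam V E h - ?L. insert x l \<in> hcliques V E h}))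
     = (\<Sum>K\<in>hcliques V E h. Gk V A ?L K) + real h * (real (card A) * rho_star V E h)"
    using G_sum[OF h2 fin AV, of E ?L] by (simp add: sum.distrib)
  have g: "(\<Sum>K\<in>hcliques V E h. Gk V A ?L K) \<le> (\<Sum>K\<in>hcliques V E h. if K \<subseteq> A then 0 else real h)"
    by (intro sum_mono) (use G_zero[OF h2, of _ V E A ?L] G_le[OF fin AV] in auto)
  have m: "real h * (real (card A) * rho_star V E h) = real h * (\<Sum>K\<in>hcliques V E h. if K \<subseteq> A then 1 else 0)"
    using mueq mu_sum[OF fin] by simp
  show ?thesis using eq g m split_h[where X="hcliques V E h" and A=A and h=h] by linarith
qed



lemma rho_le:
  assumes fin: "finite V" and AV: "A \<subseteq> V" and ne: "A \<noteq> {}"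
  shows "rho V E h A \<le> rho_star V E h"
proof -
  have "finite {rho V E h W | W. W \<subseteq> V \<and> W \<noteq> {}}"
  proof -
    have "finite {W. W \<subseteq> V \<and> W \<noteq> {}}" using fin by simp
    then show ?thesis by (rule finite_image_set)
  qed
  then show ?thesis unfolding rho_star_def using AV ne by (intro Max_ge) auto
qed

lemma mu_le:
  assumes h2: "h \<ge> 2" and fin: "finite V" and AV: "A \<subseteq> V"
  shows "real (mu V E h A) \<le> real (card A) * rho_star V E h"
proof (cases "A = {}")
  case True
  have "{K \<in> hcliques V E h. K \<subseteq> {}} = {}" using h2 by (auto simp: hcliques_def)
  then show ?thesis using True by (simp add: mu_def)
next
  case False
  have fA: "finite A" using fin AV finite_subset by blast
  then have cp: "0 < real (card A)" using False by (simp add: card_gt_0_iff)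
  have "real (mu V E h A) / real (card A) \<le> rho_star V E h"
    using rho_le[OF fin AV False] by (simp add: rho_def)
  then show ?thesis using cp by (simp add: pos_divide_le_eq mult.commute)
qed

theorem claim1:
  fixes V :: "'a set" and E :: "'a set set" and h :: nat
    and f :: "'a hnode \<Rightarrow> 'a hnode \<Rightarrow> real"
    and V1 :: "'a set" and C :: "'a hnode set"
  assumes finV: "finite V"
    and simple: "\<forall>e\<in>E. \<exists>u v. e = {u, v} \<and> u \<noteq> v \<and> u \<in> V \<and> v \<in> V"
    and h2: "h \<ge> 2"
    and maxflow: "is_max_flowH V E h f"
    and V1sub: "V1 \<subseteq> V" and V1ne: "V1 \<noteq> {}"
    and V1dens: "rho V E h V1 = rho_star V E h"
    and scc: "is_sccH V E h f C"
    and nontriv: "Src \<notin> C" "Snk \<notin> C"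
  shows "C \<subseteq> VN ` V1 \<union> LN ` {l \<in> Lam V E h. l \<subseteq> V1}
         \<or> C \<inter> (VN ` V1 \<union> LN ` {l \<in> Lam V E h. l \<subseteq> V1}) = {}"
proof -
  let ?N = "nodesH V E h" and ?r = "residH V E h f" and ?K = "hcliques V E h"
  let ?c = "\<lambda>u v. real_of_ereal (capH V E h u v)"
  have fl: "is_flowH V E h f" using maxflow by (simp add: is_max_flowH_def)
  have fV1: "finite V1" using finV V1sub finite_subset by blast
  have cV1: "0 < real (card V1)" using fV1 V1ne by (simp add: card_gt_0_iff)
  have muV1: "real (mu V E h V1) = real (card V1) * rho_star V E h"
    using V1dens cV1 by (simp add: rho_def field_simps)
  have rs0: "0 \<le> rho_star V E h"
    using V1dens[symmetric] by (simp add: rho_def)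
  have cnn: "\<And>u v. 0 \<le> capH V E h u v" using capH_nonneg[OF rs0] .
  define R where "R = {y \<in> ?N. (Src, y) \<in> ?r\<^sup>*}"
  have SrcR: "Src \<in> R" by (simp add: R_def nodesH_def)
  have SnkR: "Snk \<notin> R" using no_aug[OF finV maxflow] by (simp add: R_def)
  have RN: "R \<subseteq> ?N" by (auto simp: R_def)
  have Rsat: "ereal (f u v) = capH V E h u v" if u: "u \<in> R" and v: "v \<in> ?N - R" for u v
  proof -
    have "(u,v) \<notin> ?r"
    proof
      assume "(u,v) \<in> ?r"
      with u have "(Src, v) \<in> ?r\<^sup>*" by (auto simp: R_def intro: rtrancl_into_rtrancl)
      with v show False by (simp add: R_def)
    qed
    then show ?thesis using sat[OF fl] u v RN by auto
  qed
  define A where "A = {x\<in>V. VN x \<in> R}"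
  define L where "L = {l\<in>Lam V E h. LN l \<in> R}"
  have AV: "A \<subseteq> V" and LL: "L \<subseteq> Lam V E h" by (auto simp: A_def L_def)
  have Req: "R = {Src} \<union> VN ` A \<union> LN ` L"
  proof (intro equalityI subsetI)
    fix y assume y: "y \<in> R"
    then have "y \<in> ?N" using RN by blast
    then show "y \<in> {Src} \<union> VN ` A \<union> LN ` L" using y SnkR by (auto simp: nodesH_def A_def L_def)
  qed (use SrcR in \<open>auto simp: A_def L_def\<close>)
  have LA: "\<forall>l\<in>L. l \<subseteq> A"
  proof (intro ballI subsetI)
    fix l x assume l: "l \<in> L" and x: "x \<in> l"
    show "x \<in> A"
    proof (rule ccontr)
      assume nA: "x \<notin> A"
      have xV: "x \<in> V" using Lam_sub[of l V E h] l x by (auto simp: L_def)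
      have "VN x \<in> ?N - R" using xV nA by (auto simp: nodesH_def A_def)
      moreover have "LN l \<in> R" using l by (simp add: L_def)
      ultimately have "ereal (f (LN l) (VN x)) = capH V E h (LN l) (VN x)" using Rsat by blast
      also have "\<dots> = \<infinity>" using l x by (simp add: L_def)
      finally show False by simp
    qed
  qed
  have valR: "flow_value V E h f = (\<Sum>u\<in>R. \<Sum>v\<in>?N - R. ?c u v)"
  proof -
    have "flow_value V E h f = (\<Sum>u\<in>R. \<Sum>v\<in>?N - R. f u v)"
      using cut_value[OF fl finV RN SrcR SnkR] by simp
    also have "\<dots> = (\<Sum>u\<in>R. \<Sum>v\<in>?N - R. ?c u v)"
    proof (intro sum.cong refl)
      fix u v assume "u \<in> R" "v \<in> ?N - R"
      then have "ereal (f u v) = capH V E h u v" by (rule Rsat)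
      then show "f u v = ?c u v" by (metis real_of_ereal.simps(1))
    qed
    finally show ?thesis .
  qed
  have lowR: "real h * real (card ?K) \<le> flow_value V E h f"
    unfolding valR Req Q_formula[OF finV AV LL]
    using Q_lower[OF h2 finV AV LA mu_le[OF h2 finV AV]] .
  define \<Lambda>1 where "\<Lambda>1 = {l \<in> Lam V E h. l \<subseteq> V1}"
  define S where "S = {Src} \<union> VN ` V1 \<union> LN ` \<Lambda>1"
  have SN: "S \<subseteq> ?N" using V1sub by (auto simp: S_def \<Lambda>1_def nodesH_def)
  have SrcS: "Src \<in> S" and SnkS: "Snk \<notin> S" by (auto simp: S_def)
  have noinf: "capH V E h u v \<noteq> \<infinity>" if u: "u \<in> S" and v: "v \<in> ?N - S" for u v
  proof
    assume inf: "capH V E h u v = \<infinity>"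
    show False
    proof (cases u)
      case (LN l)
      then obtain x where vx: "v = VN x" and lx: "l \<in> Lam V E h" "x \<in> l"
        using inf by (cases v) (auto split: if_splits)
      have "l \<subseteq> V1" using u LN by (auto simp: S_def \<Lambda>1_def)
      then have "v \<in> S" using vx lx by (auto simp: S_def)
      then show False using v by simp
    next
      case Src then show False using inf by (cases v) (auto split: if_splits)
    next
      case Snk then show False using inf by (cases v) (auto split: if_splits)
    next
      case (VN x) then show False using inf by (cases v) (auto split: if_splits)
    qed
  qed
  have capfin: "capH V E h u v = ereal (?c u v)" if u: "u \<in> S" and v: "v \<in> ?N - S" for u v
    using noinf[OF u v] cnn[of u v] by (cases "capH V E h u v") auto
  have fle: "f u v \<le> ?c u v" if u: "u \<in> S" and v: "v \<in> ?N - S" for u v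
  proof -
    have uN: "u \<in> ?N" using u SN by blast
    have vN: "v \<in> ?N" using v by blast
    have "ereal (f u v) \<le> capH V E h u v" by (rule flow_cap[OF fl uN vN])
    then have "ereal (f u v) \<le> ereal (?c u v)" using capfin[OF u v] by (rule ord_le_eq_trans)
    then show ?thesis by simp
  qed
  have valS: "flow_value V E h f = (\<Sum>u\<in>S. \<Sum>v\<in>?N - S. f u v)"
    using cut_value[OF fl finV SN SrcS SnkS] by simp
  have V1L: "\<Lambda>1 \<subseteq> Lam V E h" by (auto simp: \<Lambda>1_def)
  have upS: "(\<Sum>u\<in>S. \<Sum>v\<in>?N - S. ?c u v) \<le> real h * real (card ?K)"
  proof -
    have "(\<Sum>u\<in>S. \<Sum>v\<in>?N - S. ?c u v) = (\<Sum>x\<in>V-V1. real (cdeg V E h x)) + (\<Sum>x\<in>V1. real h * rho_star V E h + real (card {l\<in>Lam V E h - \<Lambda>1. insert x l \<in> hcliques V E h}))"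
      unfolding S_def by (rule Q_formula[OF finV V1sub V1L])
    also have "\<dots> \<le> real h * real (card ?K)"
      unfolding \<Lambda>1_def by (rule Q_upper[OF h2 finV V1sub muV1])
    finally show ?thesis .
  qed
  have finN: "finite ?N" using finV by (rule finite_nodesH)
  have finS: "finite S" using finN SN finite_subset by blast
  have le1: "(\<Sum>u\<in>S. \<Sum>v\<in>?N - S. f u v) \<le> (\<Sum>u\<in>S. \<Sum>v\<in>?N - S. ?c u v)"
    using fle by (intro sum_mono) auto
  have z: "(\<Sum>u\<in>S. \<Sum>v\<in>?N - S. ?c u v - f u v) = 0"
    using le1 upS lowR valS by (simp add: sum_subtractf)
  have eqS: "f u v = ?c u v" if u: "u \<in> S" and v: "v \<in> ?N - S" for u v
  proof -
    have nn: "\<forall>u\<in>S. 0 \<le> (\<Sum>v\<in>?N - S. ?c u v - f u v)"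
      using fle by (auto intro: sum_nonneg)
    have all: "\<forall>u\<in>S. (\<Sum>v\<in>?N - S. ?c u v - f u v) = 0"
      using z sum_nonneg_eq_0_iff[OF finS nn[rule_format]] by simp
    have s0: "(\<Sum>v\<in>?N - S. ?c u v - f u v) = 0" using all u by simp
    have nn2: "\<forall>v\<in>?N - S. 0 \<le> ?c u v - f u v" using fle u by simp
    have fin2: "finite (?N - S)" using finN by simp
    have "\<forall>v\<in>?N - S. ?c u v - f u v = 0" using s0 sum_nonneg_eq_0_iff[OF fin2 nn2[rule_format]] by simp
    then show ?thesis using v by simp
  qed
  have closed: "v \<in> S" if u: "u \<in> S" and uv: "(u,v) \<in> ?r" for u v
  proof (rule ccontr)
    assume vS: "v \<notin> S"
    have "v \<in> ?N" using resid_nodes[OF uv] by blast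
    then have v: "v \<in> ?N - S" using vS by blast
    have "ereal (f u v) = capH V E h u v" by (subst capfin[OF u v]) (simp add: eqS[OF u v])
    then show False using uv by (simp add: residH_def)
  qed
  have closed_star: "(u,v) \<in> ?r\<^sup>* \<Longrightarrow> u \<in> S \<Longrightarrow> v \<in> S" for u v
    by (induction rule: rtrancl_induct) (auto intro: closed)
  obtain x where x: "x \<in> ?N" and Ceq: "C = {y \<in> ?N. (x, y) \<in> ?r\<^sup>* \<and> (y, x) \<in> ?r\<^sup>*}"
    using scc by (auto simp: is_sccH_def)
  show ?thesis
  proof (cases "C \<inter> (VN ` V1 \<union> LN ` {l \<in> Lam V E h. l \<subseteq> V1}) = {}")
    case False
    then obtain y where yC: "y \<in> C" and yM: "y \<in> VN ` V1 \<union> LN ` \<Lambda>1" by (auto simp: \<Lambda>1_def)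
    have yS: "y \<in> S" using yM by (simp add: S_def)
    have "C \<subseteq> VN ` V1 \<union> LN ` \<Lambda>1"
    proof
      fix z assume zC: "z \<in> C"
      have "(y, x) \<in> ?r\<^sup>*" "(x, z) \<in> ?r\<^sup>*" using yC zC Ceq by auto
      then have "(y, z) \<in> ?r\<^sup>*" by simp
      then have "z \<in> S" using closed_star yS by blast
      then show "z \<in> VN ` V1 \<union> LN ` \<Lambda>1" using zC nontriv by (auto simp: S_def)
    qed
    then show ?thesis by (simp add: \<Lambda>1_def)
  qed simp
qed


end
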